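(* Let $\mathcal X$ be a barreled topological real vector space, $\sigma$ a symplectic form on $\mathcal X$, $\mathcal X_{\rm bulk}\subset\mathcal X$ a linear subspace, $\mathcal X_{\rm bd}$ a topological real vector space, and $\partial:\mathcal X_{\rm bulk}'\to\mathcal X_{\rm bd}'$ a linear map whose restriction to $\mathcal X'$ is continuous $\mathcal X'\to\mathcal X_{\rm bd}'$. Let $\eta$ be a strictly positive symmetric bilinear form on $\mathcal X$ with $|v_1\cdot\sigma v_2|\le (v_1\cdot\eta v_1)^{1/2}(v_2\cdot\eta v_2)^{1/2}$ for all $v_1,v_2\in\mathcal X$. Assume (Hypothesis 1) the map $\eta:\mathcal X\to\mathcal X'$, $v\mapsto(w\mapsto w\cdot\eta v)$, is continuous; (Hypothesis 2) for every $u\in\mathcal X'$, $\partial u=0$ implies that $u$ vanishes on $\mathcal X_{\rm bulk}$. Let $\mathcal X^{\rm cpl}$ be the completion of $\mathcal X$ w.r.t. the inner product $\eta$, $\sigma^{\rm cpl}$ the continuous extension of $\sigma$ to $\mathcal X^{\rm cpl}$, and define the $C^*$-subalgebras of $\mathrm{CCR}(\mathcal X^{\rm cpl},\sigma^{\rm cpl})$ $$\mathfrak A_{\rm bulk}=\mathrm{CCR}(\mathcal X_{\rm bulk}^{\rm cl},\sigma^{\rm cpl}),\qquad \mathfrak A_{\rm bd}=\mathrm{CCR}(\mathcal X^{\partial}_{\rm bd},\sigma^{\rm cpl}),\quad \mathcal X^{\partial}_{\rm bd}=\big(\{\partial'f:f\in\mathcal X_{\rm bd}\}\big)^{\rm cl},$$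 closures being taken in $\mathcal X^{\rm cpl}$. Then $\mathfrak A_{\rm bd}\supset\mathfrak A_{\rm bulk}$.
   Context: Duals $\mathcal Y'$ carry the weak$^*$ topology; restricting $u\in\mathcal X'$ to $\mathcal X_{\rm bulk}$ regards it as an element of $\mathcal X_{\rm bulk}'$. For $\tilde u\in\mathcal X^{\rm cpl}$, $\eta^{\rm cpl}\tilde u$ denotes the functional $v\mapsto (v\cdot\eta^{\rm cpl}\tilde u)$ on $\mathcal X$ (which lies in $\mathcal X'$ under Hypothesis 1), and for $f\in\mathcal X_{\rm bd}$, $\partial'f\in\mathcal X^{\rm cpl}$ is the unique element with $(\partial'f\cdot\eta^{\rm cpl}\tilde u)=(\partial(\eta^{\rm cpl}\tilde u))(f)$ for all $\tilde u\in\mathcal X^{\rm cpl}$. For a real vector space $\mathcal Y$ with a (pre)symplectic (antisymmetric bilinear) form $\sigma$, the Weyl CCR algebra $\mathrm{CCR}(\mathcal Y,\sigma)$ is the $C^*$-algebra generated by elements $W(v)$, $v\in\mathcal Y$, with $W(v_1)W(v_2)=e^{-\frac{i}{2}v_1\cdot\sigma v_2}W(v_1+v_2)$, $W(v)^*=W(-v)$, $W(0)=1$; for a subspace $\mathcal Z\subset\mathcal Y$, $\mathrm{CCR}(\mathcal Z,\sigma)$ is the $C^*$-subalgebra generated by $W(v)$, $v\in\mathcal Z$. *)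

theory Defs
  imports "HOL-Analysis.Analysis"
begin

definition tvs :: "'x::real_vector topology \<Rightarrow> bool" where
  "tvs T \<longleftrightarrow> topspace T = UNIV
     \<and> continuous_map (prod_topology T T) T (\<lambda>(x, y). x + y)
     \<and> continuous_map (prod_topology euclideanreal T) T (\<lambda>(a, x). a *\<^sub>R x)"

definition barrel :: "'x::real_vector topology \<Rightarrow> 'x set \<Rightarrow> bool" where
  "barrel T B \<longleftrightarrow> closedin T B \<and> convex B
     \<and> (\<forall>x\<in>B. \<forall>a. \<bar>a\<bar> \<le> 1 \<longrightarrow> a *\<^sub>R x \<in> B)
     \<and> (\<forall>x. \<exists>t>0. \<forall>a. \<bar>a\<bar> \<le> t \<longrightarrow> a *\<^sub>R x \<in> B)"

definition barreled :: "'x::real_vector topology \<Rightarrow> bool" where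
  "barreled T \<longleftrightarrow> tvs T \<and>
     (\<forall>B. barrel T B \<longrightarrow> (\<exists>U. openin T U \<and> 0 \<in> U \<and> U \<subseteq> B))"

definition cdual :: "'x::real_vector topology \<Rightarrow> ('x \<Rightarrow> real) set" where
  "cdual T = {u. linear u \<and> continuous_map T euclideanreal u}"

definition wstar :: "'x::real_vector topology \<Rightarrow> ('x \<Rightarrow> real) topology" where
  "wstar T = subtopology (product_topology (\<lambda>_. euclideanreal) UNIV) (cdual T)"

text \<open>Dual of a linear subspace S (with the subspace topology); functionals are represented
  as functions on the whole type vanishing outside S.\<close>
definition sdual :: "'x::real_vector topology \<Rightarrow> 'x set \<Rightarrow> ('x \<Rightarrow> real) set" where
  "sdual T S = {u. (\<forall>x\<in>S. \<forall>y\<in>S. u (x + y) = u x + u y)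
                 \<and> (\<forall>x\<in>S. \<forall>a. u (a *\<^sub>R x) = a * u x)
                 \<and> continuous_map (subtopology T S) euclideanreal u
                 \<and> (\<forall>x. x \<notin> S \<longrightarrow> u x = 0)}"

definition wstar_sub :: "'x::real_vector topology \<Rightarrow> 'x set \<Rightarrow> ('x \<Rightarrow> real) topology" where
  "wstar_sub T S = subtopology (product_topology (\<lambda>_. euclideanreal) UNIV) (sdual T S)"

definition restr :: "'x set \<Rightarrow> ('x \<Rightarrow> real) \<Rightarrow> ('x \<Rightarrow> real)" where
  "restr S u = (\<lambda>x. if x \<in> S then u x else 0)"

text \<open>A C*-algebra encoded as a real Banach algebra with unit, together with an involution
  \<open>star\<close> and a central element \<open>j\<close> playing the role of the imaginary unit
  (so complex scalar multiplication by \<open>a + i b\<close> is \<open>a *R x + b *R (j * x)\<close>).\<close>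
definition cstar_structure :: "('a::{real_normed_algebra_1, banach} \<Rightarrow> 'a) \<Rightarrow> 'a \<Rightarrow> bool" where
  "cstar_structure star j \<longleftrightarrow>
     j * j = - 1 \<and> (\<forall>x. j * x = x * j) \<and> norm j = 1
     \<and> (\<forall>x. star (star x) = x)
     \<and> (\<forall>x y. star (x + y) = star x + star y)
     \<and> (\<forall>x a. star (a *\<^sub>R x) = a *\<^sub>R star x)
     \<and> star j = - j
     \<and> (\<forall>x y. star (x * y) = star y * star x)
     \<and> (\<forall>x. norm (star x * x) = (norm x)\<^sup>2)"

text \<open>Weyl system for the (pre)symplectic form s:
  W(v1) W(v2) = exp(-i/2 s v1 v2) W(v1+v2), W(v)^* = W(-v), W(0) = 1.\<close>
definition weyl_system ::
  "('h::real_vector \<Rightarrow> 'h \<Rightarrow> real) \<Rightarrow> ('a::{real_normed_algebra_1, banach} \<Rightarrow> 'a) \<Rightarrow> 'a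
     \<Rightarrow> ('h \<Rightarrow> 'a) \<Rightarrow> bool" where
  "weyl_system s star j W \<longleftrightarrow> cstar_structure star j
     \<and> W 0 = 1
     \<and> (\<forall>v. star (W v) = W (- v))
     \<and> (\<forall>v w. W v * W w = cos (s v w / 2) *\<^sub>R W (v + w) - sin (s v w / 2) *\<^sub>R (j * W (v + w)))"

definition cstar_generated :: "('a::{real_normed_algebra_1, banach} \<Rightarrow> 'a) \<Rightarrow> 'a \<Rightarrow> 'a set \<Rightarrow> 'a set" where
  "cstar_generated star j G = \<Inter>{B. G \<subseteq> B \<and> closed B \<and> subspace B
       \<and> (\<forall>x\<in>B. \<forall>y\<in>B. x * y \<in> B) \<and> (\<forall>x\<in>B. star x \<in> B) \<and> (\<forall>x\<in>B. j * x \<in> B)}"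

definition CCR_sub :: "('a::{real_normed_algebra_1, banach} \<Rightarrow> 'a) \<Rightarrow> 'a \<Rightarrow> ('h \<Rightarrow> 'a) \<Rightarrow> 'h set \<Rightarrow> 'a set" where
  "CCR_sub star j W Z = cstar_generated star j (W ` Z)"

end

theory Submission
  imports Defs
begin

lemma subspace_closure_real:
  fixes S :: "'a::real_normed_vector set"
  assumes "subspace S" shows "subspace (closure S)"
  unfolding subspace_def
proof (intro conjI ballI allI)
  show "0 \<in> closure S" using assms closure_subset subspace_0 by blast
next
  fix x y assume "x \<in> closure S" "y \<in> closure S"
  then obtain a b where a: "\<forall>n. a n \<in> S" "a \<longlonglongrightarrow> x" and b: "\<forall>n. b n \<in> S" "b \<longlonglongrightarrow> y"
    by (meson closure_sequential)
  have "\<forall>n. a n + b n \<in> S" using a b assms by (simp add: subspace_add)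
  moreover have "(\<lambda>n. a n + b n) \<longlonglongrightarrow> x + y" using a b by (intro tendsto_add)
  ultimately show "x + y \<in> closure S" by (meson closure_sequential)
next
  fix c and x assume "x \<in> closure S"
  then obtain a where a: "\<forall>n. a n \<in> S" "a \<longlonglongrightarrow> x"
    by (meson closure_sequential)
  have "\<forall>n. c *\<^sub>R a n \<in> S" using a assms by (simp add: subspace_scale)
  moreover have "(\<lambda>n. c *\<^sub>R a n) \<longlonglongrightarrow> c *\<^sub>R x" using a by (intro tendsto_scaleR) auto
  ultimately show "c *\<^sub>R x \<in> closure S" by (meson closure_sequential)
qed

lemma orth_from_min:
  fixes a p m :: "'h::real_inner"
  assumes "\<forall>t::real. (norm (a - p))\<^sup>2 \<le> (norm (a - p - t *\<^sub>R m))\<^sup>2"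
  shows "inner (a - p) m = 0"
proof (rule ccontr)
  define c where "c = inner (a - p) m"
  define k where "k = (norm m)\<^sup>2"
  assume "inner (a - p) m \<noteq> 0"
  hence c0: "c \<noteq> 0" by (simp add: c_def)
  have k0: "k \<ge> 0" by (simp add: k_def)
  have eq: "(norm (a - p - t *\<^sub>R m))\<^sup>2 = (norm (a - p))\<^sup>2 - 2 * t * c + t\<^sup>2 * k" for t
    unfolding power2_norm_eq_inner c_def k_def
    by (simp add: inner_diff_left inner_diff_right algebra_simps power2_eq_square inner_commute)
  define t where "t = c / (k + 1)"
  have tc: "2 * t * c \<le> t\<^sup>2 * k" using assms[rule_format, of t] eq[of t] by linarith
  have tk: "t * (k+1) = c" using k0 by (simp add: t_def)
  have "2 * t * c * ((k+1)*(k+1)) \<le> t\<^sup>2 * k * ((k+1)*(k+1))"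
    by (rule mult_right_mono[OF tc]) simp
  moreover have "2 * t * c * ((k+1)*(k+1)) = 2 * c * c * (k+1)"
    by (simp only: tk[symmetric]) (simp add: algebra_simps power2_eq_square)
  moreover have "t\<^sup>2 * k * ((k+1)*(k+1)) = c * c * k"
    by (simp only: tk[symmetric]) (simp add: algebra_simps power2_eq_square)
  ultimately have "2 * c * c * (k+1) \<le> c * c * k" by simp
  moreover have "c * c > 0" using c0 by (simp add: zero_less_mult_iff linorder_neq_iff) blast
  ultimately have "2 * (k+1) \<le> k"
    by (metis mult.assoc mult.commute mult_le_cancel_left_pos)
  thus False using k0 by (simp add: algebra_simps)
qed

lemma projection_exists:
  fixes M :: "'h::{real_inner,complete_space} set"
  assumes "closed M" "subspace M"
  shows "\<exists>p\<in>M. \<forall>m\<in>M. inner (a - p) m = 0"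
proof -
  define Q where "Q = (\<lambda>y. (norm (a - y))\<^sup>2) ` M"
  define d where "d = Inf Q"
  have Qne: "Q \<noteq> {}" using assms subspace_0 Q_def by blast
  have Qbdd: "bdd_below Q" unfolding Q_def by (rule bdd_belowI[of _ 0]) auto
  have dle: "d \<le> (norm (a - y))\<^sup>2" if "y \<in> M" for y
    unfolding d_def Q_def using Qbdd that by (auto intro: cInf_lower simp: Q_def)
  have "\<exists>y\<in>M. (norm (a - y))\<^sup>2 < d + 1 / real (Suc n)" for n
  proof -
    have "Inf Q < d + 1 / real (Suc n)" by (simp add: d_def)
    then obtain q where "q \<in> Q" "q < d + 1 / real (Suc n)" using cInf_less_iff[OF Qne Qbdd] by blast
    thus ?thesis by (auto simp: Q_def)
  qed
  then obtain y where yM: "\<forall>n. y n \<in> M" and yd: "\<forall>n. (norm (a - y n))\<^sup>2 < d + 1 / real (Suc n)"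
    by metis
  have par: "(norm (y n - y m))\<^sup>2 \<le> 2 / real (Suc n) + 2 / real (Suc m)" for n m
  proof -
    have mid: "(1/2) *\<^sub>R (y n + y m) \<in> M" using yM assms(2) by (simp add: subspace_add subspace_scale)
    have "(norm (a - (1/2) *\<^sub>R (y n + y m)))\<^sup>2 \<ge> d" using dle[OF mid] .
    moreover have "(norm (y n - y m))\<^sup>2 = 2 * (norm (a - y n))\<^sup>2 + 2 * (norm (a - y m))\<^sup>2
        - 4 * (norm (a - (1/2) *\<^sub>R (y n + y m)))\<^sup>2"
      by (simp add: power2_norm_eq_inner inner_diff_left inner_diff_right inner_add_left inner_add_right
          algebra_simps inner_commute)
    ultimately show ?thesis using yd[rule_format, of n] yd[rule_format, of m] by linarith
  qed
  have "Cauchy y"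
  proof (rule metric_CauchyI)
    fix e :: real assume e: "e > 0"
    obtain N where N: "4 / real (Suc N) < e\<^sup>2"
    proof -
      obtain N where "inverse (real (Suc N)) < e\<^sup>2 / 4" using e reals_Archimedean by (metis divide_pos_pos zero_less_numeral zero_less_power)
      thus ?thesis using that by (simp add: field_simps)
    qed
    show "\<exists>M. \<forall>m\<ge>M. \<forall>n\<ge>M. dist (y m) (y n) < e"
    proof (intro exI allI impI)
      fix m n assume "m \<ge> N" "n \<ge> N"
      have "2 / real (Suc m) \<le> 2 / real (Suc N)" "2 / real (Suc n) \<le> 2 / real (Suc N)"
        using \<open>m \<ge> N\<close> \<open>n \<ge> N\<close> by (auto simp: frac_le)
      hence "(norm (y m - y n))\<^sup>2 < e\<^sup>2" using par[of m n] N by linarith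
      hence "norm (y m - y n) < e" using e by (simp add: power_less_imp_less_base)
      thus "dist (y m) (y n) < e" by (simp add: dist_norm)
    qed
  qed
  then obtain p where yp: "y \<longlonglongrightarrow> p" using Cauchy_convergent_iff convergent_def by blast
  have pM: "p \<in> M" using assms(1) yM yp closed_sequentially by blast
  have "(\<lambda>n. (norm (a - y n))\<^sup>2) \<longlonglongrightarrow> (norm (a - p))\<^sup>2"
    by (intro tendsto_intros yp)
  moreover have "(\<lambda>n. d + 1 / real (Suc n)) \<longlonglongrightarrow> d + 0"
    by (intro tendsto_intros LIMSEQ_inverse_real_of_nat[unfolded inverse_eq_divide])
  ultimately have pd: "(norm (a - p))\<^sup>2 \<le> d + 0"
    using yd by (intro LIMSEQ_le) (auto intro: less_imp_le)
  have "inner (a - p) m = 0" if "m \<in> M" for m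
  proof (rule orth_from_min, intro allI)
    fix t :: real
    have "p + t *\<^sub>R m \<in> M" using pM that assms(2) by (simp add: subspace_add subspace_scale)
    hence "d \<le> (norm (a - (p + t *\<^sub>R m)))\<^sup>2" by (rule dle)
    hence "(norm (a - p))\<^sup>2 \<le> (norm (a - (p + t *\<^sub>R m)))\<^sup>2" using pd by linarith
    thus "(norm (a - p))\<^sup>2 \<le> (norm (a - p - t *\<^sub>R m))\<^sup>2" by (simp only: diff_diff_eq)
  qed
  thus ?thesis using pM by blast
qed

lemma riesz:
  fixes \<psi> :: "'h::{real_inner,complete_space} \<Rightarrow> real"
  assumes lin: "linear \<psi>" and cont: "continuous_on UNIV \<psi>"
  shows "\<exists>h. \<forall>u. \<psi> u = inner h u"
proof (cases "\<forall>u. \<psi> u = 0")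
  case True thus ?thesis by (intro exI[of _ 0]) simp
next
  case False
  then obtain a where a: "\<psi> a \<noteq> 0" by blast
  define K where "K = {u. \<psi> u = 0}"
  have "closed K" unfolding K_def using cont by (intro closed_Collect_eq continuous_on_const) auto
  moreover have "subspace K" unfolding K_def subspace_def using lin by (simp add: linear_add linear_scale linear_0)
  ultimately obtain p where pK: "p \<in> K" and orth: "\<forall>m\<in>K. inner (a - p) m = 0"
    using projection_exists by blast
  define z where "z = a - p"
  have pz: "\<psi> z = \<psi> a" using pK lin by (simp add: z_def K_def linear_diff)
  have zz: "inner z z \<noteq> 0" using a pz by (metis inner_eq_zero_iff linear_0 lin)
  show ?thesis
  proof (intro exI allI)
    fix u
    have "u - (\<psi> u / \<psi> z) *\<^sub>R z \<in> K" using pz a lin by (simp add: K_def linear_diff linear_scale)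
    hence "inner z (u - (\<psi> u / \<psi> z) *\<^sub>R z) = 0" using orth z_def by blast
    hence "inner z u = (\<psi> u / \<psi> z) * inner z z" by (simp add: inner_diff_right)
    hence "\<psi> u = (\<psi> z / inner z z) * inner z u" using zz pz a by (simp add: field_simps)
    thus "\<psi> u = inner ((\<psi> z / inner z z) *\<^sub>R z) u" by simp
  qed
qed

lemma tvs_add_const:
  assumes "tvs T" shows "continuous_map T T (\<lambda>v. v + a)"
proof -
  have "continuous_map T (prod_topology T T) (\<lambda>v. (v, a))"
    using assms by (intro continuous_map_pairedI) (auto simp: tvs_def)
  from continuous_map_compose[OF this conjunct1[OF conjunct2[OF assms[unfolded tvs_def]]]]
  show ?thesis by (simp add: o_def)
qed

lemma tvs_scale_const:
  assumes "tvs T" shows "continuous_map T T (\<lambda>v. c *\<^sub>R v)"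
proof -
  have "continuous_map T (prod_topology euclideanreal T) (\<lambda>v. (c, v))"
    using assms by (intro continuous_map_pairedI) (auto simp: tvs_def)
  from continuous_map_compose[OF this conjunct2[OF conjunct2[OF assms[unfolded tvs_def]]]]
  show ?thesis by (simp add: o_def)
qed

lemma barrel_cont:
  fixes \<iota> :: "'x::real_vector \<Rightarrow> 'h::real_inner"
  assumes bar: "barreled TX" and lin: "linear \<iota>"
    and cw: "\<forall>w. continuous_map TX euclideanreal (\<lambda>v. inner (\<iota> v) (\<iota> w))"
  shows "continuous_map TX euclideanreal (\<lambda>v. inner (\<iota> v) u)"
proof -
  have tvs: "tvs TX" using bar by (simp add: barreled_def)
  hence top: "topspace TX = UNIV" by (simp add: tvs_def)
  define B where "B = {v. norm (\<iota> v) \<le> 1}"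
  have Beq: "B = \<Inter> (range (\<lambda>w. {v. inner (\<iota> v) (\<iota> w) \<le> norm (\<iota> w)}))"
  proof (intro set_eqI iffI)
    fix v assume "v \<in> B"
    hence n: "norm (\<iota> v) \<le> 1" by (simp add: B_def)
    have "inner (\<iota> v) (\<iota> w) \<le> norm (\<iota> w)" for w
    proof -
      have "inner (\<iota> v) (\<iota> w) \<le> norm (\<iota> v) * norm (\<iota> w)" by (rule norm_cauchy_schwarz)
      also have "\<dots> \<le> norm (\<iota> w)" using n by (simp add: mult_left_le_one_le)
      finally show ?thesis .
    qed
    thus "v \<in> \<Inter> (range (\<lambda>w. {v. inner (\<iota> v) (\<iota> w) \<le> norm (\<iota> w)}))" by auto
  next
    fix v assume "v \<in> \<Inter> (range (\<lambda>w. {v. inner (\<iota> v) (\<iota> w) \<le> norm (\<iota> w)}))"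
    hence "inner (\<iota> v) (\<iota> v) \<le> norm (\<iota> v)" by auto
    hence "norm (\<iota> v) * norm (\<iota> v) \<le> norm (\<iota> v)" by (simp add: power2_eq_square[symmetric] power2_norm_eq_inner)
    hence "norm (\<iota> v) \<le> 1"
      by (cases "norm (\<iota> v) = 0") (auto simp: mult_le_cancel_right1)
    thus "v \<in> B" by (simp add: B_def)
  qed
  have "closedin TX B"
    unfolding Beq
  proof (rule closedin_Inter)
    show "range (\<lambda>w. {v. inner (\<iota> v) (\<iota> w) \<le> norm (\<iota> w)}) \<noteq> {}" by simp
  next
    fix S assume "S \<in> range (\<lambda>w. {v. inner (\<iota> v) (\<iota> w) \<le> norm (\<iota> w)})"
    then obtain w where S: "S = {v. inner (\<iota> v) (\<iota> w) \<le> norm (\<iota> w)}" by blast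
    have "closedin TX {x \<in> topspace TX. inner (\<iota> x) (\<iota> w) \<le> norm (\<iota> w)}"
      using cw[rule_format, of w] unfolding continuous_map_upper_lower_semicontinuous_le by blast
    thus "closedin TX S" using S top by simp
  qed
  moreover have "convex B"
  proof -
    have "convex (\<iota> -` cball 0 1)" by (rule convex_linear_vimage[OF lin convex_cball])
    moreover have "\<iota> -` cball 0 1 = B" by (auto simp: B_def)
    ultimately show ?thesis by simp
  qed
  moreover have "\<forall>x\<in>B. \<forall>a. \<bar>a\<bar> \<le> 1 \<longrightarrow> a *\<^sub>R x \<in> B"
    using lin by (auto simp: B_def linear_scale mult_le_one)
  moreover have "\<forall>x. \<exists>t>0. \<forall>a. \<bar>a\<bar> \<le> t \<longrightarrow> a *\<^sub>R x \<in> B"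
  proof
    fix x
    define t where "t = 1 / (norm (\<iota> x) + 1)"
    have np: "norm (\<iota> x) + 1 > 0" using norm_ge_zero[of "\<iota> x"] by linarith
    have t0: "t > 0" using np by (simp add: t_def)
    have "\<bar>a\<bar> * norm (\<iota> x) \<le> 1" if "\<bar>a\<bar> \<le> t" for a
    proof -
      have "\<bar>a\<bar> * norm (\<iota> x) \<le> t * norm (\<iota> x)" using that by (simp add: mult_right_mono)
      also have "\<dots> \<le> 1" using np by (simp add: t_def field_simps)
      finally show ?thesis .
    qed
    thus "\<exists>t>0. \<forall>a. \<bar>a\<bar> \<le> t \<longrightarrow> a *\<^sub>R x \<in> B"
      using t0 lin by (auto simp: B_def linear_scale)
  qed
  ultimately have "barrel TX B" by (simp add: barrel_def)
  then obtain U where U: "openin TX U" "0 \<in> U" "U \<subseteq> B" using bar by (auto simp: barreled_def)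
  show ?thesis
    unfolding Met_TC.continuous_map_to_metric[simplified]
  proof (intro ballI allI impI)
    fix x :: 'x and e :: real assume e: "e > 0"
    define c where "c = e / (norm u + 1)"
    have np: "norm u + 1 > 0" using norm_ge_zero[of u] by linarith
    have c0: "c > 0" using e np by (simp add: c_def)
    define g where "g = (\<lambda>v. (1/c) *\<^sub>R (v + (- x)))"
    have "continuous_map TX TX g"
      unfolding g_def using continuous_map_compose[OF tvs_add_const[OF tvs, of "- x"] tvs_scale_const[OF tvs, of "1/c"]]
      by (simp only: o_def)
    hence N: "openin TX (g -` U \<inter> topspace TX)" using U(1) by blast
    show "\<exists>N. openin TX N \<and> x \<in> N \<and> (\<forall>y\<in>N. dist (inner (\<iota> x) u) (inner (\<iota> y) u) < e)"
    proof (intro exI conjI ballI)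
      show "openin TX (g -` U \<inter> topspace TX)" by (rule N)
      show "x \<in> g -` U \<inter> topspace TX" using U(2) top by (simp add: g_def)
    next
      fix y assume "y \<in> g -` U \<inter> topspace TX"
      hence "g y \<in> B" using U(3) by auto
      hence "norm ((1/c) *\<^sub>R (\<iota> y - \<iota> x)) \<le> 1"
        using lin by (simp add: B_def g_def linear_scale linear_add linear_neg linear_diff)
      hence "norm (\<iota> y - \<iota> x) / c \<le> 1" using c0 by (simp only: norm_scaleR) simp
      hence ny: "norm (\<iota> y - \<iota> x) \<le> c" using c0 by (simp add: field_simps)
      have "\<bar>inner (\<iota> y - \<iota> x) u\<bar> \<le> norm (\<iota> y - \<iota> x) * norm u" by (rule Cauchy_Schwarz_ineq2)
      also have "\<dots> \<le> c * norm u" using ny by (simp add: mult_right_mono)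
      also have "\<dots> < e" using e np by (simp add: c_def field_simps)
      finally have "\<bar>inner (\<iota> y) u - inner (\<iota> x) u\<bar> < e" by (simp add: inner_diff_left)
      thus "dist (inner (\<iota> x) u) (inner (\<iota> y) u) < e" by (simp add: dist_real_def abs_minus_commute)
    qed
  qed
qed

lemma CCR_mono:
  assumes "A \<subseteq> B" shows "CCR_sub star j W A \<subseteq> CCR_sub star j W B"
  unfolding CCR_sub_def cstar_generated_def
  by (rule Inter_anti_mono) (use assms in \<open>auto dest: image_mono[of _ _ W]\<close>)

theorem theorem2p2:
  fixes TX :: "'x::real_vector topology"
    and \<sigma> :: "'x \<Rightarrow> 'x \<Rightarrow> real"
    and Xbulk :: "'x set"
    and Tbd :: "'b::real_vector topology"
    and bdry :: "('x \<Rightarrow> real) \<Rightarrow> ('b \<Rightarrow> real)"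
    and \<eta> :: "'x \<Rightarrow> 'x \<Rightarrow> real"
    and \<iota> :: "'x \<Rightarrow> 'h::{real_inner, complete_space}"
    and \<sigma>c :: "'h \<Rightarrow> 'h \<Rightarrow> real"
    and star :: "'a::{real_normed_algebra_1, banach} \<Rightarrow> 'a"
    and j :: 'a
    and W :: "'h \<Rightarrow> 'a"
  assumes barreled: "barreled TX"
    and sigma_bilin: "\<forall>v. linear (\<sigma> v)" "\<forall>w. linear (\<lambda>v. \<sigma> v w)"
    and sigma_antisym: "\<forall>v w. \<sigma> v w = - \<sigma> w v"
    and sigma_nondeg: "\<forall>v. (\<forall>w. \<sigma> v w = 0) \<longrightarrow> v = 0"
    and bulk_subspace: "subspace Xbulk"
    and bd_tvs: "tvs Tbd"
    and bdry_maps: "\<forall>u\<in>sdual TX Xbulk. bdry u \<in> cdual Tbd"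
    and bdry_add: "\<forall>u\<in>sdual TX Xbulk. \<forall>u'\<in>sdual TX Xbulk.
                     bdry (\<lambda>x. u x + u' x) = (\<lambda>f. bdry u f + bdry u' f)"
    and bdry_scale: "\<forall>u\<in>sdual TX Xbulk. \<forall>a. bdry (\<lambda>x. a * u x) = (\<lambda>f. a * bdry u f)"
    and bdry_cont: "continuous_map (wstar TX) (wstar Tbd) (\<lambda>u. bdry (restr Xbulk u))"
    and eta_bilin: "\<forall>v. linear (\<eta> v)" "\<forall>w. linear (\<lambda>v. \<eta> v w)"
    and eta_sym: "\<forall>v w. \<eta> v w = \<eta> w v"
    and eta_pos: "\<forall>v. v \<noteq> 0 \<longrightarrow> \<eta> v v > 0"
    and sigma_bound: "\<forall>v w. \<bar>\<sigma> v w\<bar> \<le> sqrt (\<eta> v v) * sqrt (\<eta> w w)"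
    and hyp1: "\<forall>v. (\<lambda>w. \<eta> w v) \<in> cdual TX"
              "continuous_map TX (wstar TX) (\<lambda>v. \<lambda>w. \<eta> w v)"
    and hyp2: "\<forall>u\<in>cdual TX. bdry (restr Xbulk u) = (\<lambda>_. 0) \<longrightarrow> (\<forall>x\<in>Xbulk. u x = 0)"
    and cpl_linear: "linear \<iota>"
    and cpl_inner: "\<forall>v w. inner (\<iota> v) (\<iota> w) = \<eta> v w"
    and cpl_dense: "closure (range \<iota>) = UNIV"
    and sigc_bilin: "bounded_bilinear \<sigma>c"
    and sigc_ext: "\<forall>v w. \<sigma>c (\<iota> v) (\<iota> w) = \<sigma> v w"
    and weyl: "weyl_system \<sigma>c star j W"
  shows "CCR_sub star j W (closure (\<iota> ` Xbulk))
         \<subseteq> CCR_sub star j W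
              (closure {h. \<exists>f. \<forall>u. inner h u = bdry (restr Xbulk (\<lambda>v. inner (\<iota> v) u)) f})"
proof -
  define L where "L = (\<lambda>u. \<lambda>v. inner (\<iota> v) u)"
  define R where "R = (\<lambda>u. restr Xbulk (\<lambda>v. inner (\<iota> v) u))"
  have tvs: "tvs TX" using barreled by (simp add: barreled_def)
  have cw: "\<forall>w. continuous_map TX euclideanreal (\<lambda>v. inner (\<iota> v) (\<iota> w))"
  proof
    fix w
    have "continuous_map TX euclideanreal (\<lambda>v. \<eta> v w)"
    proof -
      have "(\<lambda>v. \<eta> v w) \<in> cdual TX" using hyp1(1) by blast
      thus ?thesis by (simp add: cdual_def)
    qed
    thus "continuous_map TX euclideanreal (\<lambda>v. inner (\<iota> v) (\<iota> w))" using cpl_inner by simp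
  qed
  have Lcont: "continuous_map TX euclideanreal (L u)" for u
    unfolding L_def by (rule barrel_cont[OF barreled cpl_linear cw])
  have Llin: "linear (L u)" for u
    unfolding L_def using cpl_linear
    by (intro linearI) (simp_all add: linear_add linear_scale inner_add_left)
  have Lcd: "L u \<in> cdual TX" for u using Lcont Llin by (simp add: cdual_def)
  have RL: "R u = restr Xbulk (L u)" for u by (simp add: R_def L_def)
  have Rsd: "R u \<in> sdual TX Xbulk" for u
  proof -
    have "continuous_map (subtopology TX Xbulk) euclideanreal (R u)"
    proof (rule continuous_map_eq[OF continuous_map_from_subtopology[OF Lcont[of u]]])
      fix x assume "x \<in> topspace (subtopology TX Xbulk)"
      thus "L u x = R u x" by (simp add: RL restr_def)
    qed
    thus ?thesis using bulk_subspace
      by (simp add: sdual_def R_def restr_def subspace_add subspace_scale inner_add_left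
          linear_add[OF cpl_linear] linear_scale[OF cpl_linear])
  qed
  have Radd: "R (u + u') = (\<lambda>x. R u x + R u' x)" for u u'
    by (auto simp: R_def restr_def inner_add_right)
  have Rscale: "R (a *\<^sub>R u) = (\<lambda>x. a * R u x)" for a u
    by (auto simp: R_def restr_def)
  have bcd: "bdry (R u) \<in> cdual Tbd" for u using bdry_maps Rsd by blast
  define \<psi> where "\<psi> = (\<lambda>f u. bdry (R u) f)"
  have psilin: "linear (\<psi> f)" for f
  proof (rule linearI)
    fix u u' show "\<psi> f (u + u') = \<psi> f u + \<psi> f u'"
      using bdry_add Rsd by (simp add: \<psi>_def Radd)
  next
    fix a u show "\<psi> f (a *\<^sub>R u) = a *\<^sub>R \<psi> f u"
      using bdry_scale Rsd by (simp add: \<psi>_def Rscale)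
  qed
  have psicont: "continuous_on UNIV (\<psi> f)" for f
  proof -
    have "continuous_map euclidean (product_topology (\<lambda>_. euclideanreal) UNIV) L"
      unfolding continuous_map_componentwise_UNIV L_def continuous_map_iff_continuous2
      by (intro allI continuous_intros)
    hence "continuous_map euclidean (wstar TX) L"
      using Lcd by (simp add: wstar_def continuous_map_in_subtopology)
    hence "continuous_map euclidean (wstar Tbd) (\<lambda>u. bdry (restr Xbulk (L u)))"
      using continuous_map_compose[OF _ bdry_cont] by (simp add: o_def)
    moreover have "continuous_map (wstar Tbd) euclideanreal (\<lambda>g. g f)"
      unfolding wstar_def
      by (rule continuous_map_from_subtopology[OF continuous_map_product_projection]) simp
    ultimately have "continuous_map euclidean euclideanreal (\<lambda>u. bdry (restr Xbulk (L u)) f)"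
      using continuous_map_compose by (fastforce simp: o_def)
    thus ?thesis by (simp add: continuous_map_iff_continuous2 \<psi>_def RL)
  qed
  define D where "D = {h. \<exists>f. \<forall>u. inner h u = \<psi> f u}"
  have Deq: "{h. \<exists>f. \<forall>u. inner h u = bdry (restr Xbulk (\<lambda>v. inner (\<iota> v) u)) f} = D"
    by (simp add: D_def \<psi>_def R_def)
  have Dall: "\<exists>h\<in>D. \<forall>u. \<psi> f u = inner h u" for f
  proof -
    obtain h where "\<forall>u. \<psi> f u = inner h u" using riesz[OF psilin psicont] by blast
    hence "h \<in> D" unfolding D_def by (intro CollectI exI[of _ f]) simp
    thus ?thesis using \<open>\<forall>u. \<psi> f u = inner h u\<close> by blast
  qed
  have bl: "linear (bdry (R u))" for u using bcd by (simp add: cdual_def)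
  have Dsub: "subspace D"
    unfolding subspace_def
  proof (intro conjI ballI allI)
    have "\<forall>u. inner 0 u = \<psi> 0 u" using bl by (simp add: \<psi>_def linear_0)
    thus "0 \<in> D" unfolding D_def by blast
  next
    fix x y assume "x \<in> D" "y \<in> D"
    then obtain f g where fg: "\<forall>u. inner x u = \<psi> f u" "\<forall>u. inner y u = \<psi> g u"
      unfolding D_def by blast
    have "\<forall>u. inner (x + y) u = \<psi> (f + g) u"
      using fg bl by (simp add: inner_add_left \<psi>_def linear_add)
    thus "x + y \<in> D" unfolding D_def by blast
  next
    fix c x assume "x \<in> D"
    then obtain f where f: "\<forall>u. inner x u = \<psi> f u" unfolding D_def by blast
    have "\<forall>u. inner (c *\<^sub>R x) u = \<psi> (c *\<^sub>R f) u"
      using f bl by (simp add: \<psi>_def linear_scale)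
    thus "c *\<^sub>R x \<in> D" unfolding D_def by blast
  qed
  define M where "M = closure D"
  have Mcl: "closed M" and Msub: "subspace M"
    using Dsub subspace_closure_real by (auto simp: M_def)
  have inM: "\<iota> x \<in> M" if xb: "x \<in> Xbulk" for x
  proof -
    obtain p where pM: "p \<in> M" and orth: "\<forall>m\<in>M. inner (\<iota> x - p) m = 0"
      using projection_exists[OF Mcl Msub] by blast
    define q where "q = \<iota> x - p"
    have orth': "inner q m = 0" if "m \<in> M" for m using orth that unfolding q_def by blast
    have psi0: "\<psi> f q = 0" for f
    proof -
      obtain h where hD: "h \<in> D" and hp: "\<forall>u. \<psi> f u = inner h u" using Dall by blast
      have "h \<in> M" using hD closure_subset unfolding M_def by blast
      hence "inner q h = 0" by (rule orth')
      thus ?thesis using hp by (simp add: inner_commute)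
    qed
    have "bdry (restr Xbulk (L q)) = (\<lambda>_. 0)"
    proof
      fix f show "bdry (restr Xbulk (L q)) f = 0" using psi0[of f] unfolding \<psi>_def RL .
    qed
    hence "\<forall>y\<in>Xbulk. L q y = 0" by (rule mp[OF bspec[OF hyp2 Lcd[of q]]])
    hence "inner (\<iota> x) q = 0" using xb by (simp add: L_def)
    moreover have "inner p q = 0" using orth'[OF pM] by (simp add: inner_commute)
    ultimately have "inner (\<iota> x - p) q = 0" by (simp only: inner_diff_left)
    hence "inner q q = 0" by (simp only: q_def)
    hence "q = 0" by simp
    hence "\<iota> x = p" unfolding q_def by simp
    thus ?thesis using pM by simp
  qed
  have "closure (\<iota> ` Xbulk) \<subseteq> M" using inM Mcl by (intro closure_minimal) auto
  thus ?thesis unfolding Deq M_def[symmetric] by (rule CCR_mono)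
qed

end
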